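(* Let $q\ge2$, $n\ge 1$, and ${\boldsymbol y}\in\Sigma_q^{n-1}$ with run length profile $(r_1,\dots,r_{\rho({\boldsymbol y})})$. Then $\mathsf{H}^{\mathsf{In}}_{1\text{-}\mathsf{Del}}({\boldsymbol y})$ is invariant to permutations of the run length profile of ${\boldsymbol y}$ and $$\mathsf{H}^{\mathsf{In}}_{1\text{-}\mathsf{Del}}({\boldsymbol y})=\log_2(nq)-\frac{1}{nq}\sum_{i=1}^{\rho({\boldsymbol y})}(r_i+1)\log_2(r_i+1).$$
   Context: $\Sigma_q=\{0,1,\dots,q-1\}$. For sequences ${\boldsymbol x}$ of length $N$ and ${\boldsymbol y}$ of length $\ell\le N$, $\omega_{{\boldsymbol y}}({\boldsymbol x})$ is the number of index tuples $1\le i_1<\dots<i_\ell\le N$ with $x_{i_j}=y_j$. The $k$-deletion channel with input length $n$ maps ${\boldsymbol x}\in\Sigma_q^n$ to ${\boldsymbol y}\in\Sigma_q^{n-k}$ with probability $\omega_{{\boldsymbol y}}({\boldsymbol x})/\binom nk$. Under uniform transmission $X$ is uniform on $\Sigma_q^n$ and $\mathsf{H}^{\mathsf{In}}_{k\text{-}\mathsf{Del}}({\boldsymbol y})=H(X\mid Y={\boldsymbol y})$ (base-2 logarithms), the posterior being $P({\boldsymbol x}\mid {\boldsymbol y})=\Pr\{{\boldsymbol y}\mid{\boldsymbol x}\}/\sum_{{\boldsymbol x}'}\Pr\{{\boldsymbol y}\mid{\boldsymbol x}'\}$. A run is a maximal block of identical consecutive symbols; $\rho({\boldsymbol y})$ is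 the number of runs and the run length profile is the vector $(r_1,\dots,r_{\rho({\boldsymbol y})})$ of run lengths in order from left to right. *)

theory Defs
  imports Complex_Main "HOL-Library.Multiset"
begin

definition seqs :: "nat \<Rightarrow> nat \<Rightarrow> nat list set" where
  "seqs q n = {x. length x = n \<and> set x \<subseteq> {0..<q}}"

text \<open>omega_y(x): number of increasing index tuples (= index subsets of size |y|)
  at which x reads y.\<close>
definition omega :: "nat list \<Rightarrow> nat list \<Rightarrow> nat" where
  "omega y x = card {I. I \<subseteq> {0..<length x} \<and> card I = length y \<and> nths x I = y}"

definition del_prob :: "nat \<Rightarrow> nat \<Rightarrow> nat list \<Rightarrow> nat list \<Rightarrow> real" where
  "del_prob n k x y = real (omega y x) / real (n choose k)"

text \<open>Posterior P(x | y) under uniform input on Sigma_q^n.\<close>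
definition posterior :: "nat \<Rightarrow> nat \<Rightarrow> nat \<Rightarrow> nat list \<Rightarrow> nat list \<Rightarrow> real" where
  "posterior q n k y x = del_prob n k x y / (\<Sum>x'\<in>seqs q n. del_prob n k x' y)"

definition H_in_del :: "nat \<Rightarrow> nat \<Rightarrow> nat \<Rightarrow> nat list \<Rightarrow> real" where
  "H_in_del q n k y = - (\<Sum>x\<in>seqs q n. let p = posterior q n k y x in
                          if p = 0 then 0 else p * log 2 p)"

function rlp :: "'a list \<Rightarrow> nat list" where
  "rlp [] = []"
| "rlp (a # xs) = Suc (length (takeWhile (\<lambda>z. z = a) xs)) # rlp (dropWhile (\<lambda>z. z = a) xs)"
  by pat_completeness auto
termination
  by (relation "measure length") (auto simp: le_imp_less_Suc length_dropWhile_le)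

definition num_runs :: "'a list \<Rightarrow> nat" where
  "num_runs y = length (rlp y)"

end

theory Submission
  imports Defs
begin

definition ins :: "nat \<Rightarrow> 'a \<Rightarrow> 'a list \<Rightarrow> 'a list" where
  "ins i b y = take i y @ b # drop i y"

definition Cnt :: "nat \<Rightarrow> nat list \<Rightarrow> nat list \<Rightarrow> nat" where
  "Cnt q y x = card {(i,b). i \<le> length y \<and> b < q \<and> ins i b y = x}"

lemma nths_del:
  assumes "i < length x"
  shows "nths x ({0..<length x} - {i}) = take i x @ drop (Suc i) x"
proof -
  have x: "x = take i x @ (x!i # drop (Suc i) x)"
    using assms by (simp add: id_take_nth_drop)
  have "nths x ({0..<length x} - {i}) = nths (take i x) ({0..<length x} - {i}) @
     nths (x!i # drop (Suc i) x) {j. j + length (take i x) \<in> {0..<length x} - {i}}"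
    by (subst x, subst nths_append) simp
  also have "nths (take i x) ({0..<length x} - {i}) = take i x"
    using assms by (intro nths_all) auto
  also have "nths (x!i # drop (Suc i) x) {j. j + length (take i x) \<in> {0..<length x} - {i}}
      = drop (Suc i) x"
    using assms by (simp add: nths_Cons, intro nths_all) auto
  finally show ?thesis .
qed

lemma finite_seqs: "finite (seqs q n)"
  unfolding seqs_def using finite_lists_length_eq[of "{0..<q}" n] by (simp add: conj_commute)

lemma seqs_0: "seqs q 0 = {[]}"
  unfolding seqs_def by auto

lemma seqs_Suc: "seqs q (Suc k) = (\<lambda>(b,w). b#w) ` ({0..<q} \<times> seqs q k)"
  unfolding seqs_def
  by (auto simp: length_Suc_conv image_iff)

lemma sum_seqs_Suc:
  "(\<Sum>x\<in>seqs q (Suc k). f x) = (\<Sum>b<q. \<Sum>w\<in>seqs q k. f (b#w))"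
proof -
  have "(\<Sum>x\<in>seqs q (Suc k). f x) = (\<Sum>p\<in>{0..<q} \<times> seqs q k. f ((\<lambda>(b,w). b#w) p))"
    unfolding seqs_Suc by (subst sum.reindex) (auto simp: inj_on_def)
  also have "\<dots> = (\<Sum>b\<in>{0..<q}. \<Sum>w\<in>seqs q k. f (b#w))"
    by (simp add: sum.cartesian_product split_def)
  finally show ?thesis by (simp add: atLeast0LessThan)
qed

lemma ins_0[simp]: "ins 0 b y = b # y"
  by (simp add: ins_def)

lemma ins_Suc_Cons[simp]: "ins (Suc i) b (a # y) = a # ins i b y"
  by (simp add: ins_def)

lemma finite_Cnt_set: "finite {(i,b). i \<le> length y \<and> b < (q::nat) \<and> ins i b (y::nat list) = x}"
  by (rule finite_subset[of _ "{0..length y} \<times> {0..<q}"]) auto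


lemma Cnt_Nil: "Cnt q [] [b] = (if b < q then 1 else 0)"
proof -
  have "{(i,b'). i \<le> length ([]::nat list) \<and> b' < q \<and> ins i b' [] = [b]} =
        (if b < q then {(0,b)} else {})"
    by (auto simp: ins_def)
  then show ?thesis by (simp add: Cnt_def)
qed

lemma Cnt_Cons:
  "Cnt q (a#y) (b#w) = (if w = a#y \<and> b < q then 1 else 0) + (if b = a then Cnt q y w else 0)"
proof -
  let ?S = "{(i,b'). i \<le> length (a#y) \<and> b' < q \<and> ins i b' (a#y) = b#w}"
  let ?A = "if w = a#y \<and> b < q then {(0::nat,b)} else {}"
  let ?T = "{(i,b'). i \<le> length y \<and> b' < q \<and> ins i b' y = w}"
  let ?B = "if b = a then (\<lambda>(i,b'). (Suc i, b')) ` ?T else {}"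
  have eq: "?S = ?A \<union> ?B"
  proof (rule set_eqI)
    fix p :: "nat \<times> nat"
    obtain i b' where p: "p = (i,b')" by fastforce
    show "p \<in> ?S \<longleftrightarrow> p \<in> ?A \<union> ?B"
      unfolding p by (cases i) (auto simp: image_iff)
  qed
  have fT: "finite ?T" by (rule finite_Cnt_set)
  have "card (?A \<union> ?B) = card ?A + card ?B"
    by (rule card_Un_disjoint) (use fT in auto)
  moreover have "card ?B = (if b = a then card ?T else 0)"
    by (auto simp: card_image inj_on_def)
  ultimately show ?thesis unfolding Cnt_def eq by simp
qed

lemma Cnt_self:
  "set (a#y) \<subseteq> {0..<q} \<Longrightarrow> Cnt q y (a#y) = Suc (length (takeWhile (\<lambda>z. z = a) y))"
proof (induction y arbitrary: a)
  case Nil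
  then show ?case by (simp add: Cnt_Nil)
next
  case (Cons b y)
  have "Cnt q y (b#y) = Suc (length (takeWhile (\<lambda>z. z = b) y))"
    using Cons.prems by (intro Cons.IH) auto
  then show ?case using Cons.prems by (simp add: Cnt_Cons)
qed

lemma S_rec:
  fixes g :: "nat \<Rightarrow> real"
  assumes "set (a#y) \<subseteq> {0..<q}" "g 0 = 0"
  shows "(\<Sum>x\<in>seqs q (Suc (Suc (length y))). g (Cnt q (a#y) x)) =
    (\<Sum>w\<in>seqs q (Suc (length y)). g (Cnt q y w)) - g (Cnt q y (a#y)) + g (Cnt q y (a#y) + 1)
    + (real q - 1) * g 1"
proof -
  have ay: "a#y \<in> seqs q (Suc (length y))" using assms(1) by (simp add: seqs_def)
  have aq: "a < q" using assms(1) by auto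
  let ?F = "\<lambda>b. \<Sum>w\<in>seqs q (Suc (length y)). g (Cnt q (a#y) (b#w))"
  have "(\<Sum>x\<in>seqs q (Suc (Suc (length y))). g (Cnt q (a#y) x)) = (\<Sum>b\<in>{0..<q}. ?F b)"
    by (simp add: sum_seqs_Suc atLeast0LessThan)
  also have "\<dots> = ?F a + (\<Sum>b\<in>{0..<q}-{a}. ?F b)"
    using aq by (subst sum.remove[of _ a]) auto
  also have "(\<Sum>b\<in>{0..<q}-{a}. ?F b) = (\<Sum>b\<in>{0..<q}-{a}. g 1)"
  proof (rule sum.cong)
    fix b assume b: "b \<in> {0..<q}-{a}"
    have "?F b = (\<Sum>w\<in>seqs q (Suc (length y)). if w = a#y then g 1 else 0)"
      using b assms(2) by (intro sum.cong) (auto simp: Cnt_Cons)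
    also have "\<dots> = g 1" using ay finite_seqs by (simp add: sum.delta)
    finally show "?F b = g 1" .
  qed simp
  also have "\<dots> = (real q - 1) * g 1" using aq by (simp add: of_nat_diff)
  also have "?F a = (\<Sum>w\<in>seqs q (Suc (length y)). g (Cnt q y w) +
      (if w = a#y then g (Cnt q y w + 1) - g (Cnt q y w) else 0))"
    using aq by (intro sum.cong) (auto simp: Cnt_Cons)
  also have "\<dots> = (\<Sum>w\<in>seqs q (Suc (length y)). g (Cnt q y w)) + (g (Cnt q y (a#y) + 1) - g (Cnt q y (a#y)))"
    using ay finite_seqs by (simp add: sum.distrib sum.delta)
  finally show ?thesis by simp
qed

lemma S_base:
  fixes g :: "nat \<Rightarrow> real"
  shows "(\<Sum>x\<in>seqs q (Suc 0). g (Cnt q [] x)) = real q * g 1"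
  by (simp add: sum_seqs_Suc seqs_0 Cnt_Nil)


lemma omega_Cnt:
  assumes x: "x \<in> seqs q (Suc (length y))"
  shows "omega y x = Cnt q y x"
proof -
  let ?N = "length x"
  let ?S = "{(i,b). i \<le> length y \<and> b < q \<and> ins i b y = x}"
  let ?f = "\<lambda>(i::nat,b::nat). {0..<?N} - {i}"
  have N: "?N = Suc (length y)" and xq: "set x \<subseteq> {0..<q}" using x by (auto simp: seqs_def)
  have eq: "{I. I \<subseteq> {0..<?N} \<and> card I = length y \<and> nths x I = y} = ?f ` ?S"
  proof (rule set_eqI, rule iffI)
    fix I assume "I \<in> {I. I \<subseteq> {0..<?N} \<and> card I = length y \<and> nths x I = y}"
    then have I: "I \<subseteq> {0..<?N}" "card I = length y" "nths x I = y" by auto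
    have "card ({0..<?N} - I) = 1" using I N by (simp add: card_Diff_subset finite_subset)
    then obtain i where i: "{0..<?N} - I = {i}" by (auto simp: card_Suc_eq)
    have iN: "i < ?N" using i by auto
    have Ieq: "I = {0..<?N} - {i}" using i I(1) by auto
    have y: "y = take i x @ drop (Suc i) x" using I(3) Ieq nths_del[OF iN] by simp
    have "(i, x!i) \<in> ?S"
    proof -
      have "x!i < q" using xq iN by (auto simp: set_conv_nth)
      moreover have "ins i (x!i) y = x"
        using iN by (simp add: y ins_def min_def id_take_nth_drop[symmetric])
      ultimately show ?thesis using iN N by auto
    qed
    then show "I \<in> ?f ` ?S" using Ieq by (auto simp: image_iff intro!: bexI[of _ "(i, x!i)"])
  next
    fix I assume "I \<in> ?f ` ?S"
    then obtain i b where ib: "i \<le> length y" "b < q" "ins i b y = x" and I: "I = {0..<?N} - {i}"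
      by auto
    have iN: "i < ?N" using ib N by simp
    have "nths x I = y"
      using I nths_del[OF iN] ib by (auto simp: ins_def)
    then show "I \<in> {I. I \<subseteq> {0..<?N} \<and> card I = length y \<and> nths x I = y}"
      using I iN N by auto
  qed
  have inj: "inj_on ?f ?S"
  proof (rule inj_onI)
    fix p p' assume hp: "p \<in> ?S" "p' \<in> ?S" "?f p = ?f p'"
    obtain i b where p: "p = (i,b)" by fastforce
    obtain i' b' where p': "p' = (i',b')" by fastforce
    have h: "i \<le> length y" "ins i b y = x" "i' \<le> length y" "ins i' b' y = x"
      "{0..<?N} - {i} = {0..<?N} - {i'}" using hp unfolding p p' by auto
    have "i < ?N" "i' < ?N" using h N by auto
    moreover have "i \<notin> {0..<?N} - {i'}" unfolding h(5)[symmetric] by simp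
    ultimately have ii: "i = i'" by simp
    have "x ! i = b" using h(1,2) by (auto simp: ins_def nth_append min_def)
    moreover have "x ! i' = b'" using h(3,4) by (auto simp: ins_def nth_append min_def)
    ultimately show "p = p'" using ii p p' by simp
  qed
  show ?thesis unfolding omega_def Cnt_def eq using inj by (simp add: card_image)
qed



lemma S_sum:
  "set y \<subseteq> {0..<q} \<Longrightarrow> (\<Sum>x\<in>seqs q (Suc (length y)). real (Cnt q y x)) = real (Suc (length y)) * real q"
proof (induction y)
  case Nil
  then show ?case using S_base[where q=q and g=real] by simp
next
  case (Cons a y)
  have "(\<Sum>x\<in>seqs q (Suc (length (a#y))). real (Cnt q (a#y) x)) =
     (\<Sum>w\<in>seqs q (Suc (length y)). real (Cnt q y w)) + real q"
    using S_rec[where a=a and y=y and q=q and g=real] Cons.prems by simp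
  then show ?case using Cons by (simp add: algebra_simps)
qed

definition gg :: "nat \<Rightarrow> real" where "gg k = real k * log 2 (real k)"

lemma rlp_Cons_rec:
  "sum_list (map (\<lambda>r. gg (r+1)) (rlp (a#y))) = sum_list (map (\<lambda>r. gg (r+1)) (rlp y))
     - gg (Suc (length (takeWhile (\<lambda>z. z = a) y))) + gg (Suc (length (takeWhile (\<lambda>z. z = a) y)) + 1)"
proof (cases y)
  case Nil
  then show ?thesis by (simp add: gg_def)
next
  case (Cons b y')
  then show ?thesis by (cases "b = a") (auto simp: gg_def)
qed

lemma S_log:
  "set y \<subseteq> {0..<q} \<Longrightarrow> (\<Sum>x\<in>seqs q (Suc (length y)). gg (Cnt q y x)) = sum_list (map (\<lambda>r. gg (r+1)) (rlp y))"
proof (induction y)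
  case Nil
  then show ?case using S_base[where q=q and g=gg] by (simp add: gg_def)
next
  case (Cons a y)
  have "(\<Sum>x\<in>seqs q (Suc (length (a#y))). gg (Cnt q (a#y) x)) =
     (\<Sum>w\<in>seqs q (Suc (length y)). gg (Cnt q y w)) - gg (Cnt q y (a#y)) + gg (Cnt q y (a#y) + 1)"
    using S_rec[where a=a and y=y and q=q and g=gg] Cons.prems by (simp add: gg_def)
  then show ?case using Cons Cnt_self[OF Cons.prems] rlp_Cons_rec[of a y] by (simp del: rlp.simps)
qed


lemma H_formula:
  assumes q: "q \<ge> 1" and y: "y \<in> seqs q m"
  shows "H_in_del q (Suc m) 1 y = log 2 (real (Suc m) * real q)
     - (1 / (real (Suc m) * real q)) * sum_list (map (\<lambda>r. gg (r+1)) (rlp y))"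
proof -
  have ly: "length y = m" and sy: "set y \<subseteq> {0..<q}" using y by (auto simp: seqs_def)
  define N where "N = real (Suc m) * real q"
  have Npos: "N > 0" using q by (simp add: N_def)
  have om: "\<And>x. x \<in> seqs q (Suc m) \<Longrightarrow> omega y x = Cnt q y x"
    using omega_Cnt ly by blast
  have sumC: "(\<Sum>x\<in>seqs q (Suc m). real (Cnt q y x)) = N"
    using S_sum[OF sy] ly by (simp add: N_def)
  have sumG: "(\<Sum>x\<in>seqs q (Suc m). gg (Cnt q y x)) = sum_list (map (\<lambda>r. gg (r+1)) (rlp y))"
    using S_log[OF sy] ly by simp
  have den: "(\<Sum>x'\<in>seqs q (Suc m). del_prob (Suc m) 1 x' y) = real q"
  proof -
    have "(\<Sum>x'\<in>seqs q (Suc m). del_prob (Suc m) 1 x' y) =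
        (\<Sum>x'\<in>seqs q (Suc m). real (Cnt q y x') / real (Suc m))"
      by (intro sum.cong) (auto simp: del_prob_def om)
    also have "\<dots> = N / real (Suc m)" by (simp add: sum_divide_distrib[symmetric] sumC)
    finally show ?thesis by (simp add: N_def)
  qed
  have post: "\<And>x. x \<in> seqs q (Suc m) \<Longrightarrow> posterior q (Suc m) 1 y x = real (Cnt q y x) / N"
    unfolding posterior_def den by (simp add: del_prob_def om N_def)
  have trm: "\<And>x. x \<in> seqs q (Suc m) \<Longrightarrow>
      (let p = posterior q (Suc m) 1 y x in if p = 0 then 0 else p * log 2 p)
      = gg (Cnt q y x) / N - real (Cnt q y x) / N * log 2 N"
  proof -
    fix x assume x: "x \<in> seqs q (Suc m)"
    show "?thesis x"
    proof (cases "Cnt q y x = 0")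
      case True then show ?thesis using post[OF x] by (simp add: gg_def)
    next
      case False
      then have c: "real (Cnt q y x) > 0" by simp
      have L: "log 2 (real (Cnt q y x) / N) = log 2 (real (Cnt q y x)) - log 2 N"
        using c Npos by (simp add: log_divide)
      show ?thesis unfolding Let_def post[OF x] L using c Npos
        by (simp add: gg_def right_diff_distrib)
    qed
  qed
  have "H_in_del q (Suc m) 1 y = - (\<Sum>x\<in>seqs q (Suc m). gg (Cnt q y x) / N - real (Cnt q y x) / N * log 2 N)"
    unfolding H_in_del_def by (rule arg_cong[where f=uminus], rule sum.cong[OF refl trm])
  also have "\<dots> = log 2 N - (1 / N) * (\<Sum>x\<in>seqs q (Suc m). gg (Cnt q y x))"
    using Npos
    by (simp add: sum_subtractf sum_divide_distrib[symmetric] sum_distrib_right[symmetric] sumC)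
  finally show ?thesis by (simp add: sumG N_def)
qed

lemma sum_runs:
  "(\<Sum>i<num_runs y. (real (rlp y ! i) + 1) * log 2 (real (rlp y ! i) + 1))
    = sum_list (map (\<lambda>r. gg (r+1)) (rlp y))"
  unfolding num_runs_def gg_def
  by (simp add: sum_list_sum_nth atLeast0LessThan add.commute)

theorem theorem1:
  fixes q n :: nat and y :: "nat list"
  assumes "q \<ge> 2" and "n \<ge> 1" and "y \<in> seqs q (n - 1)"
  shows "(\<forall>y' \<in> seqs q (n - 1). mset (rlp y') = mset (rlp y)
            \<longrightarrow> H_in_del q n 1 y' = H_in_del q n 1 y)
       \<and> H_in_del q n 1 y = log 2 (real n * real q)
            - (1 / (real n * real q)) *
              (\<Sum>i<num_runs y. (real (rlp y ! i) + 1) * log 2 (real (rlp y ! i) + 1))"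
proof -
  have n: "n = Suc (n - 1)" using assms(2) by simp
  have q: "q \<ge> 1" using assms(1) by simp
  have main: "H_in_del q n 1 z = log 2 (real n * real q)
     - (1 / (real n * real q)) * sum_list (map (\<lambda>r. gg (r+1)) (rlp z))"
    if "z \<in> seqs q (n - 1)" for z
    using H_formula[OF q that] n by simp
  have ms: "sum_list (map f xs) = sum_mset (image_mset f (mset xs))" for f :: "nat \<Rightarrow> real" and xs
    by (simp flip: sum_mset_sum_list)
  show ?thesis
  proof
    show "\<forall>y' \<in> seqs q (n - 1). mset (rlp y') = mset (rlp y)
            \<longrightarrow> H_in_del q n 1 y' = H_in_del q n 1 y"
      using main assms(3) ms by metis
    show "H_in_del q n 1 y = log 2 (real n * real q)
            - (1 / (real n * real q)) *
              (\<Sum>i<num_runs y. (real (rlp y ! i) + 1) * log 2 (real (rlp y ! i) + 1))"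
      unfolding sum_runs using main[OF assms(3)] .
  qed
qed

end
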